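(* Let $g$ be a continuous probability density on $\mathbb{R}$ whose support is contained in $(1,3)$, and let $\bar\lambda=\int_0^4 \lambda\, g(\lambda)\,d\lambda$. Let $\mu^*$ be an invariant probability measure on $[0,1]$ of the Perron–Frobenius operator $P^*$ associated with $g$, i.e. $P^*\mu^*=\mu^*$. Then $$E_{\mu^*}[X]=\int_0^1 x\,d\mu^*(x) \;<\; \frac{\bar\lambda-1}{\bar\lambda},$$ where $\frac{\bar\lambda-1}{\bar\lambda}$ is the non-zero (attracting) fixed point of the deterministic logistic map $S_{\bar\lambda}$.
   Context: For $\lambda\in[0,4]$ let $S_\lambda(x)=\lambda x(1-x)$ on $[0,1]$. The stochastic logistic map is the Markov chain $X_{n+1}=\lambda_{n+1}X_n(1-X_n)$, where $\lambda_1,\lambda_2,\dots$ are i.i.d. with density $g$ supported in $[0,4]$ and independent of $X_0$. For a Borel probability measure $\mu$ on $[0,1]$, the Perron–Frobenius operator is $P^*\mu(A)=\int_0^4 \mu\big(S_\lambda^{-1}(A)\big)\,g(\lambda)\,d\lambda$ for Borel $A\subseteq[0,1]$. A probability measure $\mu^*$ is invariant if $P^*\mu^*=\mu^*$. *)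

theory Defs
  imports "HOL-Probability.Probability"
begin

definition logistic :: "real \<Rightarrow> real \<Rightarrow> real" where
  "logistic l x = l * x * (1 - x)"

definition PF_op :: "(real \<Rightarrow> real) \<Rightarrow> real measure \<Rightarrow> real set \<Rightarrow> real" where
  "PF_op g \<mu> A = (LINT l:{0..4}|lborel. measure \<mu> {x\<in>{0..1}. logistic l x \<in> A} * g l)"

definition PF_invariant :: "(real \<Rightarrow> real) \<Rightarrow> real measure \<Rightarrow> bool" where
  "PF_invariant g \<mu> \<longleftrightarrow>
     prob_space \<mu> \<and> sets \<mu> = sets (restrict_space borel {0..1}) \<and>
     (\<forall>A \<in> sets (restrict_space borel {0..1}). PF_op g \<mu> A = measure \<mu> A)"

end

theory Submission
  imports Defs
begin

lemma logistic_range: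
  fixes a b :: real
  assumes "0 \<le> a" "a \<le> 4" "0 \<le> b" "b \<le> 1"
  shows "0 \<le> logistic a b \<and> logistic a b \<le> 1"
proof -
  have "b*(1-b) \<le> 1/4" using zero_le_power2[of "b - 1/2"] by (simp add: algebra_simps power2_eq_square)
  moreover have "0 \<le> b*(1-b)" using assms by simp
  ultimately have "a*(b*(1-b)) \<le> 4*(1/4)" using assms by (intro mult_mono) auto
  then show ?thesis
    using assms \<open>0 \<le> b*(1-b)\<close> by (simp add: mult.assoc logistic_def)
qed

theorem theorem1:
  fixes g :: "real \<Rightarrow> real" and \<mu> :: "real measure"
  assumes g_cont: "continuous_on UNIV g"
    and g_nonneg: "\<And>l. g l \<ge> 0"
    and g_int: "integrable lborel g"
    and g_prob: "(\<integral>l. g l \<partial>lborel) = 1"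
    and g_supp: "closure {l. g l \<noteq> 0} \<subseteq> {1<..<3}"
    and inv: "PF_invariant g \<mu>"
  shows "(\<integral>x. x \<partial>\<mu>) <
           ((LINT l:{0..4}|lborel. l * g l) - 1) / (LINT l:{0..4}|lborel. l * g l)"
proof -
  define M01 where "M01 = restrict_space (borel::real measure) {0..1}"
  define L where "L = restrict_space (lborel::real measure) {0..4}"
  define \<nu> where "\<nu> = density L g"
  define K where "K = (\<lambda>l. distr \<mu> M01 (logistic l))"
  have ps: "prob_space \<mu>" and setsmu[measurable_cong]: "sets \<mu> = sets M01"
    and invA: "\<And>A. A \<in> sets M01 \<Longrightarrow> PF_op g \<mu> A = measure \<mu> A"
    using inv unfolding PF_invariant_def M01_def by auto
  interpret mu: prob_space \<mu> by fact
  have spmu: "space \<mu> = {0..1}"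
    using sets_eq_imp_space_eq[OF setsmu] by (simp add: M01_def space_restrict_space)
  have gz: "g l = 0" if "l \<notin> {1<..<3}" for l
  proof (rule ccontr)
    assume "g l \<noteq> 0"
    hence "l \<in> closure {l. g l \<noteq> 0}" using closure_subset[of "{l. g l \<noteq> 0}"] by auto
    thus False using g_supp that by (auto dest: subsetD)
  qed
  have gm[measurable]: "g \<in> borel_measurable borel"
    using g_cont by (rule borel_measurable_continuous_onI)
  have sets_nu[measurable_cong]: "sets \<nu> = sets L" unfolding \<nu>_def by simp
  have sp_nu: "space \<nu> = {0..4}" unfolding \<nu>_def L_def by (simp add: space_restrict_space)
  have gmL[measurable]: "g \<in> borel_measurable L" unfolding L_def
    by (rule measurable_restrict_space1) simp
  have "emeasure \<nu> (space \<nu>) = (\<integral>\<^sup>+l. ennreal (g l) * indicator {0..4} l \<partial>L)"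
  proof -
    have spL: "space L = {0..4}" by (simp add: L_def space_restrict_space)
    have "space \<nu> = space L" by (simp add: \<nu>_def)
    then show ?thesis unfolding \<nu>_def by (simp add: emeasure_density spL[symmetric] del: space_density)
  qed
  also have "\<dots> = (\<integral>\<^sup>+l. ennreal (g l) * indicator {0..4} l \<partial>lborel)"
    unfolding L_def by (subst nn_integral_restrict_space) (auto intro!: nn_integral_cong split: split_indicator)
  also have "\<dots> = (\<integral>\<^sup>+l. ennreal (g l) \<partial>lborel)"
    by (rule nn_integral_cong) (auto simp: gz split: split_indicator)
  also have "\<dots> = 1" using nn_integral_eq_integral[OF g_int] g_nonneg g_prob by simp
  finally have "prob_space \<nu>" by (intro prob_spaceI) simp
  interpret nu: prob_space \<nu> by fact
  have logm[measurable]: "(\<lambda>(l,x). logistic l x) \<in> measurable (L \<Otimes>\<^sub>M M01) M01"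
    unfolding M01_def
  proof (rule measurable_restrict_space2)
    show "(\<lambda>(l,x). logistic l x) \<in> space (L \<Otimes>\<^sub>M restrict_space borel {0..1}) \<rightarrow> {0..1}"
      using logistic_range by (auto simp: space_pair_measure L_def space_restrict_space)
    show "(\<lambda>(l,x). logistic l x) \<in> borel_measurable (L \<Otimes>\<^sub>M restrict_space borel {0..1})"
    proof -
      have idL: "(\<lambda>x::real. x) \<in> borel_measurable L" unfolding L_def
        by (rule measurable_restrict_space1) simp
      have idR: "(\<lambda>x::real. x) \<in> borel_measurable (restrict_space borel {0..1})"
        by (rule measurable_restrict_space1) simp
      have [measurable]: "(\<lambda>p. fst p :: real) \<in> borel_measurable (L \<Otimes>\<^sub>M restrict_space borel {0..1})"
        using measurable_compose[OF measurable_fst idL] by blast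
      have [measurable]: "(\<lambda>p. snd p :: real) \<in> borel_measurable (L \<Otimes>\<^sub>M restrict_space borel {0..1})"
        using measurable_compose[OF measurable_snd[of L "restrict_space borel {0..1}"] idR] by simp
      have "(\<lambda>p. fst p * snd p * (1 - snd p)) \<in> borel_measurable (L \<Otimes>\<^sub>M restrict_space borel {0..1})"
        by measurable
      then show ?thesis by (simp add: logistic_def case_prod_beta')
    qed
  qed
  have Km[measurable]: "K \<in> measurable \<nu> (subprob_algebra M01)"
    unfolding K_def
  proof (rule measurable_distr2[where M=M01 and g="\<lambda>_. \<mu>"])
    show "(\<lambda>(l,x). logistic l x) \<in> measurable (\<nu> \<Otimes>\<^sub>M M01) M01"
      using logm by (simp cong: measurable_cong_sets add: sets_pair_measure_cong[OF sets_nu refl])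
    show "(\<lambda>_. \<mu>) \<in> measurable \<nu> (subprob_algebra M01)"
      by (rule measurable_const) (simp add: space_subprob_algebra setsmu mu.subprob_space_axioms)
  qed
  have spL: "space L = {0..4}" by (simp add: L_def space_restrict_space)
  have hm_nu: "(LINT l:{0..4}|lborel. h l * g l) = (\<integral>l. h l \<partial>\<nu>)"
    if hm: "h \<in> borel_measurable \<nu>" for h :: "real \<Rightarrow> real"
  proof -
    have hL: "h \<in> borel_measurable L" using hm measurable_cong_sets[OF sets_nu refl] by simp
    have "(\<integral>l. h l \<partial>\<nu>) = (\<integral>l. g l *\<^sub>R h l \<partial>L)"
      unfolding \<nu>_def by (rule integral_density[OF hL gmL]) (simp add: g_nonneg)
    also have "\<dots> = (\<integral>l. indicator {0..4} l *\<^sub>R (g l *\<^sub>R h l) \<partial>lborel)"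
      unfolding L_def by (rule integral_restrict_space) simp
    also have "\<dots> = (LINT l:{0..4}|lborel. h l * g l)"
      unfolding set_lebesgue_integral_def by (rule Bochner_Integration.integral_cong) (auto simp: mult.commute)
    finally show ?thesis by simp
  qed
  have logl: "logistic l \<in> measurable \<mu> M01" if "l \<in> {0..4}" for l
  proof -
    have "(\<lambda>y. (\<lambda>(l,x). logistic l x) (l, y)) \<in> measurable M01 M01"
      by (rule measurable_Pair2[OF logm]) (use that in \<open>simp add: spL\<close>)
    thus ?thesis by (simp add: measurable_cong_sets[OF setsmu refl])
  qed
  have sK: "sets (K l) = sets M01" for l unfolding K_def by simp
  have emK: "emeasure (K l) A = ennreal (measure \<mu> {x\<in>{0..1}. logistic l x \<in> A})"
    if "l \<in> {0..4}" "A \<in> sets M01" for l A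
  proof -
    have "emeasure (K l) A = emeasure \<mu> (logistic l -` A \<inter> space \<mu>)"
      unfolding K_def by (rule emeasure_distr[OF logl[OF that(1)] that(2)])
    also have "logistic l -` A \<inter> space \<mu> = {x\<in>{0..1}. logistic l x \<in> A}" by (auto simp: spmu)
    finally show ?thesis by (simp add: mu.emeasure_eq_measure)
  qed
  have hAm: "(\<lambda>l. measure \<mu> {x\<in>{0..1}. logistic l x \<in> A}) \<in> borel_measurable \<nu>" if "A \<in> sets M01" for A
  proof -
    have "(\<lambda>l. enn2real (emeasure (K l) A)) \<in> borel_measurable \<nu>"
      by (intro borel_measurable_enn2real measurable_compose[OF Km measurable_emeasure_subprob_algebra[OF that]])
    moreover have "\<And>l. l \<in> space \<nu> \<Longrightarrow> measure \<mu> {x\<in>{0..1}. logistic l x \<in> A} = enn2real (emeasure (K l) A)"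
      using emK that sp_nu by simp
    ultimately show ?thesis by (subst measurable_cong) auto
  qed
  have nempty: "space \<nu> \<noteq> {}" by (simp add: sp_nu)
  have mu_eq: "\<mu> = \<nu> \<bind> K"
  proof (rule measure_eqI)
    show "sets \<mu> = sets (\<nu> \<bind> K)" using sets_bind[of \<nu> K M01] sK nempty setsmu by simp
    fix A assume A: "A \<in> sets \<mu>"
    hence A01: "A \<in> sets M01" by (simp add: setsmu)
    let ?h = "\<lambda>l. measure \<mu> {x\<in>{0..1}. logistic l x \<in> A}"
    have hb: "integrable \<nu> ?h"
    proof (rule nu.integrable_const_bound[where B=1])
      show "AE x in \<nu>. norm (?h x) \<le> 1" by (rule AE_I2) (simp add: mu.prob_le_1)
    qed (rule hAm[OF A01])
    have "emeasure \<mu> A = ennreal (PF_op g \<mu> A)" using invA[OF A01] by (simp add: mu.emeasure_eq_measure)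
    also have "PF_op g \<mu> A = (\<integral>l. ?h l \<partial>\<nu>)" unfolding PF_op_def by (rule hm_nu[OF hAm[OF A01]])
    also have "ennreal (\<integral>l. ?h l \<partial>\<nu>) = (\<integral>\<^sup>+l. ennreal (?h l) \<partial>\<nu>)"
      by (rule nn_integral_eq_integral[symmetric, OF hb]) simp
    also have "\<dots> = (\<integral>\<^sup>+l. emeasure (K l) A \<partial>\<nu>)"
      by (rule nn_integral_cong) (simp add: emK A01 sp_nu)
    also have "\<dots> = emeasure (\<nu> \<bind> K) A"
      by (rule emeasure_bind[symmetric, OF nempty Km A01])
    finally show "emeasure \<mu> A = emeasure (\<nu> \<bind> K) A" .
  qed
  have idM[measurable]: "(\<lambda>x::real. x) \<in> borel_measurable M01"
    unfolding M01_def by (rule measurable_restrict_space1) simp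
  have idmu[measurable]: "(\<lambda>x::real. x) \<in> borel_measurable \<mu>"
    using idM measurable_cong_sets[OF setsmu refl] by simp
  have idL': "(\<lambda>x::real. x) \<in> borel_measurable L" unfolding L_def
    by (rule measurable_restrict_space1) simp
  have idnu[measurable]: "(\<lambda>x::real. x) \<in> borel_measurable \<nu>"
    using idL'  measurable_cong_sets[OF sets_nu refl] by simp
  have bmu: "AE x in \<mu>. 0 \<le> x \<and> x \<le> 1" by (rule AE_I2) (simp add: spmu)
  have bnu: "AE l in \<nu>. 0 \<le> l \<and> l \<le> 4" by (rule AE_I2) (simp add: sp_nu)
  have int_x: "integrable \<mu> (\<lambda>x. x)"
  proof (rule mu.integrable_const_bound[where B=1])
    show "AE x in \<mu>. norm x \<le> 1" using bmu by eventually_elim auto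
  qed simp
  have int_x2: "integrable \<mu> (\<lambda>x. x\<^sup>2)"
  proof (rule mu.integrable_const_bound[where B=1])
    show "AE x in \<mu>. norm (x\<^sup>2) \<le> 1" using bmu by eventually_elim (auto simp: abs_square_le_1)
  qed simp
  have int_log: "integrable \<mu> (\<lambda>x. logistic l x)" if l: "l \<in> {0..4}" for l
  proof (rule mu.integrable_const_bound[where B=1])
    show "AE x in \<mu>. norm (logistic l x) \<le> 1" using bmu by eventually_elim (use logistic_range[of l] l in auto)
  qed (simp add: logistic_def)
  have int_l: "integrable \<nu> (\<lambda>l. l)"
  proof (rule nu.integrable_const_bound[where B=4])
    show "AE x in \<nu>. norm x \<le> 4" using bnu by eventually_elim auto
  qed simp
  define m where "m = (\<integral>x. x \<partial>\<mu>)"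
  define s where "s = (\<integral>x. x\<^sup>2 \<partial>\<mu>)"
  define c where "c = (\<integral>x. x * (1 - x) \<partial>\<mu>)"
  define lam where "lam = (\<integral>l. l \<partial>\<nu>)"
  have lam_eq: "(LINT l:{0..4}|lborel. l * g l) = lam" unfolding lam_def by (rule hm_nu[OF idnu])
  have c_eq: "c = m - s"
  proof -
    have "c = (\<integral>x. x - x\<^sup>2 \<partial>\<mu>)" unfolding c_def
      by (rule Bochner_Integration.integral_cong) (auto simp: power2_eq_square algebra_simps)
    also have "\<dots> = m - s" unfolding m_def s_def by (rule Bochner_Integration.integral_diff[OF int_x int_x2])
    finally show ?thesis .
  qed
  have m_nonneg: "0 \<le> m" unfolding m_def by (rule integral_nonneg_AE) (use bmu in \<open>eventually_elim, auto\<close>)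
  have c_nonneg: "0 \<le> c" unfolding c_def by (rule integral_nonneg_AE) (use bmu in \<open>eventually_elim, auto\<close>)
  have lam_nonneg: "0 \<le> lam" unfolding lam_def by (rule integral_nonneg_AE) (use bnu in \<open>eventually_elim, auto\<close>)
  have ennM01[measurable]: "(\<lambda>x. ennreal x) \<in> borel_measurable M01" by measurable
  have "ennreal m = (\<integral>\<^sup>+x. ennreal x \<partial>\<mu>)"
    unfolding m_def by (rule nn_integral_eq_integral[symmetric, OF int_x]) (use bmu in \<open>eventually_elim, auto\<close>)
  also have "\<dots> = (\<integral>\<^sup>+l. \<integral>\<^sup>+x. ennreal x \<partial>K l \<partial>\<nu>)"
    by (subst mu_eq) (rule nn_integral_bind[OF ennM01 Km])
  also have "\<dots> = (\<integral>\<^sup>+l. ennreal (l * c) \<partial>\<nu>)"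
  proof (rule nn_integral_cong)
    fix l assume "l \<in> space \<nu>" hence l: "l \<in> {0..4}" by (simp add: sp_nu)
    have "(\<integral>\<^sup>+x. ennreal x \<partial>K l) = (\<integral>\<^sup>+x. ennreal (logistic l x) \<partial>\<mu>)"
      unfolding K_def by (rule nn_integral_distr[OF logl[OF l]]) simp
    also have "\<dots> = ennreal (\<integral>x. logistic l x \<partial>\<mu>)"
      by (rule nn_integral_eq_integral[OF int_log[OF l]]) (use bmu in \<open>eventually_elim, use logistic_range[of l] l in auto\<close>)
    also have "(\<integral>x. logistic l x \<partial>\<mu>) = l * c" unfolding logistic_def c_def by (simp add: mult.assoc)
    finally show "(\<integral>\<^sup>+x. ennreal x \<partial>K l) = ennreal (l * c)" .
  qed
  also have "\<dots> = ennreal (\<integral>l. l * c \<partial>\<nu>)"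
    by (rule nn_integral_eq_integral) (use int_l in simp, use bnu in \<open>eventually_elim, use c_nonneg in auto\<close>)
  also have "(\<integral>l. l * c \<partial>\<nu>) = lam * c" unfolding lam_def by simp
  finally have "m = lam * c" using m_nonneg lam_nonneg c_nonneg by simp
  hence meq: "m = lam * (m - s)" by (simp add: c_eq)
  have AEgt: "AE l in \<nu>. 1 < l"
    unfolding \<nu>_def
  proof (subst AE_density)
    show "(\<lambda>x. ennreal (g x)) \<in> borel_measurable L" by measurable
    show "AE x in L. 0 < ennreal (g x) \<longrightarrow> 1 < x"
    proof (rule AE_I2, rule impI)
      fix l assume "0 < ennreal (g l)"
      hence "g l \<noteq> 0" by auto
      thus "1 < l" using gz by (cases "l \<in> {1<..<3}") auto
    qed
  qed
  have lam_gt: "1 < lam"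
  proof (rule ccontr)
    assume nl: "\<not> 1 < lam"
    have i: "integrable \<nu> (\<lambda>l. l - 1)" using int_l by simp
    have "(\<integral>l. l - 1 \<partial>\<nu>) = lam - 1" unfolding lam_def
      using int_l by (simp add: Bochner_Integration.integral_diff nu.prob_space)
    hence le: "(\<integral>l. l - 1 \<partial>\<nu>) \<le> 0" using nl by simp
    have nn: "AE l in \<nu>. 0 \<le> l - 1" using AEgt by eventually_elim simp
    have "(\<integral>l. l - 1 \<partial>\<nu>) = 0" using integral_nonneg_AE[OF nn] le by simp
    hence "AE l in \<nu>. l - 1 = 0" using integral_nonneg_eq_0_iff_AE[OF i nn] by simp
    with AEgt have "AE l in \<nu>. False" by eventually_elim simp
    thus False by (simp add: nu.AE_False)
  qed
  have var: "mu.variance (\<lambda>x. x) = s - m\<^sup>2" unfolding s_def m_def by (rule mu.variance_eq[OF int_x int_x2])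
  have var_nn: "0 \<le> mu.variance (\<lambda>x. x)" by (rule integral_nonneg_AE) simp
  have goal: "m < (lam - 1) / lam"
  proof (rule ccontr)
    assume "\<not> m < (lam - 1) / lam"
    hence mge: "(lam - 1) / lam \<le> m" by simp
    have "0 < (lam - 1) / lam" using lam_gt by simp
    hence mpos: "0 < m" using mge by simp
    have sge: "m\<^sup>2 \<le> s" using var var_nn by simp
    have "m = lam * m - lam * s" using meq by (simp add: algebra_simps)
    also have "\<dots> \<le> lam * m - lam * m\<^sup>2" using sge lam_gt by simp
    finally have "m * 1 \<le> m * (lam - lam * m)" by (simp add: algebra_simps power2_eq_square)
    hence "1 \<le> lam - lam * m" using mpos by simp
    hence "m \<le> (lam - 1) / lam" using lam_gt by (simp add: field_simps)
    hence mval: "m = (lam - 1) / lam" using mge by simp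
    have "m = 1 - 1 / lam" using mval lam_gt by (simp add: diff_divide_distrib)
    moreover have "0 < 1 / lam" using lam_gt by simp
    ultimately have m1: "m < 1" by linarith
    have "lam * m = lam - 1" using mval lam_gt by (simp add: field_simps)
    hence lm: "lam * m = lam - 1" .
    have "lam * s = lam * m - m" using meq by (simp add: algebra_simps)
    also have "\<dots> = m * (lam - 1)" by (simp add: algebra_simps)
    also have "\<dots> = m * (lam * m)" using lm by simp
    finally have "lam * s = lam * m\<^sup>2" by (simp add: power2_eq_square algebra_simps)
    hence "s = m\<^sup>2" using lam_gt by simp
    hence v0: "mu.variance (\<lambda>x. x) = 0" using var by simp
    have i2: "integrable \<mu> (\<lambda>x. (x - m)\<^sup>2)"
    proof (rule mu.integrable_const_bound[where B=1])
      show "AE x in \<mu>. norm ((x - m)\<^sup>2) \<le> 1" using bmu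
      proof eventually_elim
        fix x :: real assume "0 \<le> x \<and> x \<le> 1"
        hence "\<bar>x - m\<bar> \<le> 1" using mpos m1 by auto
        thus "norm ((x - m)\<^sup>2) \<le> 1" by (simp add: abs_square_le_1)
      qed
    qed simp
    have "(\<integral>x. (x - m)\<^sup>2 \<partial>\<mu>) = 0" using v0 by (simp add: m_def)
    hence "AE x in \<mu>. (x - m)\<^sup>2 = 0"
      using integral_nonneg_eq_0_iff_AE[OF i2] by simp
    hence AEm: "AE x in \<mu>. x = m" by eventually_elim simp
    have m01: "m \<in> {0..1}" using mpos m1 by simp
    have sing: "{m} \<in> sets M01" unfolding M01_def using m01 by (subst sets_restrict_space_iff) auto
    have N: "space \<mu> - {m} \<in> sets \<mu>" using sing setsmu by auto
    have "emeasure \<mu> (space \<mu> - {m}) = 0"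
      using AEm by (subst AE_iff_measurable[OF N, symmetric]) auto
    hence N0: "measure \<mu> (space \<mu> - {m}) = 0" by (simp add: measure_def)
    have "measure \<mu> {m} = 1" using mu.prob_eq_1[of "{m}"] sing setsmu AEm by simp
    also have "measure \<mu> {m} = PF_op g \<mu> {m}" using invA[OF sing] by simp
    also have "\<dots> = (\<integral>l. measure \<mu> {x\<in>{0..1}. logistic l x \<in> {m}} \<partial>\<nu>)"
      unfolding PF_op_def by (rule hm_nu[OF hAm[OF sing]])
    also have "\<dots> = (\<integral>l. 0 \<partial>\<nu>)"
    proof (rule integral_cong_AE)
      show "(\<lambda>l. measure \<mu> {x\<in>{0..1}. logistic l x \<in> {m}}) \<in> borel_measurable \<nu>" by (rule hAm[OF sing])
      show "(\<lambda>l. 0::real) \<in> borel_measurable \<nu>" by simp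
      have "AE l in \<nu>. l \<noteq> 1 / (1 - m)"
        unfolding \<nu>_def
      proof (rule AE_density[THEN iffD2])
        show "(\<lambda>x. ennreal (g x)) \<in> borel_measurable L" by measurable
        have "AE l in lborel. l \<noteq> 1 / (1 - m)" by (rule AE_lborel_singleton)
        hence "AE l in L. l \<noteq> 1 / (1 - m)" unfolding L_def
          by (subst AE_restrict_space_iff) (auto elim: AE_mp)
        thus "AE l in L. 0 < ennreal (g l) \<longrightarrow> l \<noteq> 1 / (1 - m)" by eventually_elim simp
      qed
      thus "AE l in \<nu>. measure \<mu> {x\<in>{0..1}. logistic l x \<in> {m}} = 0"
      proof eventually_elim
        fix l assume l: "l \<noteq> 1 / (1 - m)"
        have sub: "{x\<in>{0..1}. logistic l x \<in> {m}} \<subseteq> space \<mu> - {m}"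
        proof
          fix x assume x: "x \<in> {x\<in>{0..1}. logistic l x \<in> {m}}"
          have "x \<noteq> m"
          proof
            assume "x = m"
            with x have "l * m * (1 - m) = m" by (simp add: logistic_def)
            hence "m * (l * (1 - m)) = m * 1" by (simp add: ac_simps)
            hence "l * (1 - m) = 1" using mpos by (subst (asm) mult_left_cancel) auto
            hence "l = 1 / (1 - m)" using m1 by (simp add: field_simps)
            with l show False by simp
          qed
          thus "x \<in> space \<mu> - {m}" using x spmu by auto
        qed
        have "measure \<mu> {x\<in>{0..1}. logistic l x \<in> {m}} \<le> measure \<mu> (space \<mu> - {m})"
          by (rule mu.finite_measure_mono[OF sub N])
        thus "measure \<mu> {x\<in>{0..1}. logistic l x \<in> {m}} = 0" using N0 measure_nonneg[of \<mu>] by (simp add: order_antisym)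
      qed
    qed
    finally show False by simp
  qed
  show ?thesis using goal unfolding lam_eq m_def .
qed
end
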